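(* Let $E_1,E_2$ be nonempty bounded subsets of $M_a$ and $f:E_1\to E_2$ a surjective $d_a$-isometry; let $p\in E_1$ and $q=f(p)$. Then: (a) whenever $x_1,x_2,\dots\in E_1$ and $\alpha_1,\alpha_2,\dots\in\mathbb R$ are such that $\sum_i\alpha_i(x_i-p)$ converges in $M_a$, the series $\sum_i\alpha_i(f(x_i)-q)$ also converges in $M_a$; and (b) if moreover $y_1,y_2,\dots\in E_1$, $\beta_1,\beta_2,\dots\in\mathbb R$ with $\sum_i\alpha_i(x_i-p)=\sum_i\beta_i(y_i-p)\in M_a$, then $\sum_i\alpha_i(f(x_i)-q)=\sum_i\beta_i(f(y_i)-q)$. Consequently the map $F:\mathrm{GS}(E_1,p)\to M_a$, $F\big(p+\sum_i\alpha_i(x_i-p)\big)=q+\sum_i\alpha_i(f(x_i)-q)$, is well defined.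
   Context: Let $a=\{a_i\}$ be a sequence of positive reals with $\sum_i a_i^2<\infty$, $M_a=\{x\in\mathbb{R}^{\mathbb N}:\sum_i a_i^2x_i^2<\infty\}$ with inner product $\langle x,y\rangle_a=\sum_i a_i^2x_iy_i$, norm $\|\cdot\|_a$ and metric $d_a(x,y)=\|x-y\|_a$; a $d_a$-isometry is a map preserving $d_a$. Sums are indexed by finite or countable subsets of $\mathbb N$, and infinite sums are $\|\cdot\|_a$-limits of partial sums. For $p\in E\subset M_a$, $\mathrm{GS}(E,p)=\{p+\sum_i\alpha_i(x_i-p)\in M_a: x_i\in E,\ \alpha_i\in\mathbb R\}$. *)

theory Defs
  imports "HOL-Analysis.Analysis"
begin

definition Ma :: "(nat \<Rightarrow> real) \<Rightarrow> (nat \<Rightarrow> real) set" where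
  "Ma a = {x. summable (\<lambda>i. (a i)^2 * (x i)^2)}"

definition norm_a :: "(nat \<Rightarrow> real) \<Rightarrow> (nat \<Rightarrow> real) \<Rightarrow> real" where
  "norm_a a x = sqrt (\<Sum>i. (a i)^2 * (x i)^2)"

definition dist_a :: "(nat \<Rightarrow> real) \<Rightarrow> (nat \<Rightarrow> real) \<Rightarrow> (nat \<Rightarrow> real) \<Rightarrow> real" where
  "dist_a a x y = norm_a a (\<lambda>j. x j - y j)"

definition ga_sums :: "(nat \<Rightarrow> real) \<Rightarrow> (nat \<Rightarrow> nat \<Rightarrow> real) \<Rightarrow> (nat \<Rightarrow> real) \<Rightarrow> bool" where
  "ga_sums a u s \<longleftrightarrow> s \<in> Ma a \<and>
     (\<lambda>n. norm_a a (\<lambda>j. (\<Sum>i<n. u i j) - s j)) \<longlonglongrightarrow> 0"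

definition ga_summable :: "(nat \<Rightarrow> real) \<Rightarrow> (nat \<Rightarrow> nat \<Rightarrow> real) \<Rightarrow> bool" where
  "ga_summable a u \<longleftrightarrow> (\<exists>s. ga_sums a u s)"

definition bounded_a :: "(nat \<Rightarrow> real) \<Rightarrow> (nat \<Rightarrow> real) set \<Rightarrow> bool" where
  "bounded_a a E \<longleftrightarrow> (\<exists>C. \<forall>x\<in>E. \<forall>y\<in>E. dist_a a x y \<le> C)"

definition GS :: "(nat \<Rightarrow> real) \<Rightarrow> (nat \<Rightarrow> real) set \<Rightarrow> (nat \<Rightarrow> real) \<Rightarrow> (nat \<Rightarrow> real) set" where
  "GS a E p = {z. \<exists>x \<alpha> s. (\<forall>i. x i \<in> E) \<and>
      ga_sums a (\<lambda>i j. \<alpha> i * (x i j - p j)) s \<and> z = (\<lambda>j. p j + s j)}"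

end

theory Submission imports Defs begin

typedef l2 = "{x::nat\<Rightarrow>real. summable (\<lambda>i. (x i)^2)}"
  morphisms l2v mkl2
  by (rule exI[of _ "\<lambda>i. 0"]) simp

lemma sq_summable_add:
  fixes x y :: "nat \<Rightarrow> real"
  assumes "summable (\<lambda>i. (x i)^2)" "summable (\<lambda>i. (y i)^2)"
  shows "summable (\<lambda>i. (x i + y i)^2)"
proof (rule summable_comparison_test[where g="\<lambda>i. 2*(x i)^2 + 2*(y i)^2"])
  have "norm ((x n + y n)\<^sup>2) \<le> 2 * (x n)\<^sup>2 + 2 * (y n)\<^sup>2" for n
  proof -
    have "(x n + y n)\<^sup>2 \<le> 2 * (x n)\<^sup>2 + 2 * (y n)\<^sup>2"
      using sum_squares_bound[of "x n" "y n"] by (simp add: power2_sum)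
    then show ?thesis by simp
  qed
  then show "\<exists>N. \<forall>n\<ge>N. norm ((x n + y n)\<^sup>2) \<le> 2 * (x n)\<^sup>2 + 2 * (y n)\<^sup>2" by blast
  show "summable (\<lambda>i. 2*(x i)^2 + 2*(y i)^2)"
    using assms by (intro summable_add summable_mult)
qed

lemma sq_summable_scale:
  fixes x :: "nat \<Rightarrow> real"
  assumes "summable (\<lambda>i. (x i)^2)"
  shows "summable (\<lambda>i. (c * x i)^2)"
  using summable_mult[OF assms, of "c^2"] by (simp add: power_mult_distrib)

lemma sq_summable_prod:
  fixes x y :: "nat \<Rightarrow> real"
  assumes "summable (\<lambda>i. (x i)^2)" "summable (\<lambda>i. (y i)^2)"
  shows "summable (\<lambda>i. x i * y i)"
proof (rule summable_comparison_test[where g="\<lambda>i. (x i)^2 + (y i)^2"])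
  have "norm (x n * y n) \<le> (x n)\<^sup>2 + (y n)\<^sup>2" for n
    unfolding real_norm_def abs_mult using sum_squares_bound[of "\<bar>x n\<bar>" "\<bar>y n\<bar>"]
      mult_nonneg_nonneg[OF abs_ge_zero abs_ge_zero, of "x n" "y n"] by (simp only: power2_abs)
  then show "\<exists>N. \<forall>n\<ge>N. norm (x n * y n) \<le> (x n)\<^sup>2 + (y n)\<^sup>2" by blast
  show "summable (\<lambda>i. (x i)^2 + (y i)^2)"
    using assms by (intro summable_add)
qed

lemma l2v_sum[simp]: "summable (\<lambda>i. (l2v x i)^2)"
  using l2v by auto

lemma l2v_inj: "l2v x = l2v y \<Longrightarrow> x = y" by (simp add: l2v_inject)

instantiation l2 :: real_inner
begin
definition "(0::l2) = mkl2 (\<lambda>i. 0)"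
definition "(x::l2) + y = mkl2 (\<lambda>i. l2v x i + l2v y i)"
definition "- (x::l2) = mkl2 (\<lambda>i. - l2v x i)"
definition "(x::l2) - y = mkl2 (\<lambda>i. l2v x i - l2v y i)"
definition "scaleR c (x::l2) = mkl2 (\<lambda>i. c * l2v x i)"
definition "inner (x::l2) y = (\<Sum>i. l2v x i * l2v y i)"
definition "norm (x::l2) = sqrt (inner x x)"
definition "sgn (x::l2) = scaleR (inverse (norm x)) x"
definition "dist (x::l2) y = norm (x - y)"
definition "uniformity = (INF e\<in>{0<..}. principal {(x::l2, y). dist x y < e})"
definition "open (U::l2 set) = (\<forall>x\<in>U. \<forall>\<^sub>F (x', y) in uniformity. x' = x \<longrightarrow> y \<in> U)"

lemma l2v_zero[simp]: "l2v 0 = (\<lambda>i. 0)"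
  by (simp add: zero_l2_def mkl2_inverse)
lemma l2v_add[simp]: "l2v (x + y) = (\<lambda>i. l2v x i + l2v y i)"
  by (simp add: plus_l2_def mkl2_inverse sq_summable_add)
lemma l2v_uminus[simp]: "l2v (- x) = (\<lambda>i. - l2v x i)"
  by (simp add: uminus_l2_def mkl2_inverse)
lemma l2v_minus[simp]: "l2v (x - y) = (\<lambda>i. l2v x i - l2v y i)"
  using sq_summable_add[OF l2v_sum[of x] sq_summable_scale[OF l2v_sum[of y], of "-1"]]
  by (simp add: minus_l2_def mkl2_inverse)
lemma l2v_scaleR[simp]: "l2v (scaleR c x) = (\<lambda>i. c * l2v x i)"
  by (simp add: scaleR_l2_def mkl2_inverse sq_summable_scale)

instance
proof
  fix x y z :: l2 and a b :: real
  show "x + y + z = x + (y + z)" by (rule l2v_inj) (simp add: algebra_simps)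
  show "x + y = y + x" by (rule l2v_inj) (simp add: algebra_simps)
  show "0 + x = x" by (rule l2v_inj) simp
  show "- x + x = 0" by (rule l2v_inj) simp
  show "x - y = x + - y" by (rule l2v_inj) simp
  show "a *\<^sub>R (x + y) = a *\<^sub>R x + a *\<^sub>R y" by (rule l2v_inj) (simp add: algebra_simps)
  show "(a + b) *\<^sub>R x = a *\<^sub>R x + b *\<^sub>R x" by (rule l2v_inj) (simp add: algebra_simps)
  show "a *\<^sub>R b *\<^sub>R x = (a * b) *\<^sub>R x" by (rule l2v_inj) (simp add: algebra_simps)
  show "1 *\<^sub>R x = x" by (rule l2v_inj) simp
  show "sgn x = inverse (norm x) *\<^sub>R x" by (simp add: sgn_l2_def)
  show "dist x y = norm (x - y)" by (simp add: dist_l2_def)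
  show "uniformity = (INF e\<in>{0<..}. principal {(x::l2, y). dist x y < e})"
    by (simp add: uniformity_l2_def)
  show "\<And>U::l2 set. open U = (\<forall>x\<in>U. \<forall>\<^sub>F (x', y) in uniformity. x' = x \<longrightarrow> y \<in> U)"
    by (simp add: open_l2_def)
  show "inner x y = inner y x" by (simp add: inner_l2_def mult.commute)
  show "inner (x + y) z = inner x z + inner y z"
    unfolding inner_l2_def
    by (simp add: distrib_right suminf_add[symmetric] sq_summable_prod)
  show "inner (a *\<^sub>R x) y = a * inner x y"
    unfolding inner_l2_def
    by (simp add: mult.assoc suminf_mult[symmetric] sq_summable_prod)
  show "0 \<le> inner x x"
    unfolding inner_l2_def by (intro suminf_nonneg) (auto simp: sq_summable_prod)
  show "(inner x x = 0) = (x = 0)"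
  proof
    assume "inner x x = 0"
    then have "(\<Sum>i. (l2v x i)^2) = 0" by (simp add: inner_l2_def power2_eq_square)
    then have "\<forall>i. (l2v x i)^2 = 0"
      using suminf_eq_zero_iff[OF l2v_sum] by simp
    then show "x = 0" by (intro l2v_inj) auto
  qed (simp add: inner_l2_def)
  show "norm x = sqrt (inner x x)" by (simp add: norm_l2_def)
qed
end


lemma l2_norm_sq: "(norm x)^2 = (\<Sum>i. (l2v x i)^2)"
proof -
  have "(norm x)^2 = inner x x" by (rule power2_norm_eq_inner)
  also have "\<dots> = (\<Sum>i. (l2v x i)^2)" by (simp add: inner_l2_def power2_eq_square)
  finally show ?thesis .
qed

lemma l2_partial_le: "(\<Sum>i<K. (l2v x i)^2) \<le> (norm x)^2"
  unfolding l2_norm_sq by (rule sum_le_suminf) auto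

lemma l2_coord_le: "\<bar>l2v x i\<bar> \<le> norm x"
proof -
  have "(l2v x i)^2 \<le> (\<Sum>k<Suc i. (l2v x k)^2)"
    by (rule member_le_sum) auto
  also have "\<dots> \<le> (norm x)^2" by (rule l2_partial_le)
  finally show ?thesis using abs_le_square_iff by (metis abs_norm_cancel)
qed

instance l2 :: complete_space
proof
  fix X :: "nat \<Rightarrow> l2" assume C: "Cauchy X"
  have "Cauchy (\<lambda>n. l2v (X n) i)" for i
  proof (rule metric_CauchyI)
    fix e :: real assume "e > 0"
    then obtain M where M: "\<forall>m\<ge>M. \<forall>n\<ge>M. dist (X m) (X n) < e"
      using metric_CauchyD[OF C] by blast
    show "\<exists>M. \<forall>m\<ge>M. \<forall>n\<ge>M. dist (l2v (X m) i) (l2v (X n) i) < e"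
    proof (intro exI allI impI)
      fix m n assume "m \<ge> M" "n \<ge> M"
      then have "dist (X m) (X n) < e" using M by blast
      moreover have "\<bar>l2v (X m - X n) i\<bar> \<le> norm (X m - X n)" by (rule l2_coord_le)
      ultimately show "dist (l2v (X m) i) (l2v (X n) i) < e"
        by (simp add: dist_norm dist_real_def)
    qed
  qed
  then have "convergent (\<lambda>n. l2v (X n) i)" for i
    by (simp add: Cauchy_convergent_iff)
  then obtain L where L: "\<And>i. (\<lambda>n. l2v (X n) i) \<longlonglongrightarrow> L i"
    unfolding convergent_def by metis
  define D where "D = (\<lambda>n i. (l2v (X n) i - L i)^2)"
  have key: "\<exists>N. \<forall>n\<ge>N. summable (D n) \<and> suminf (D n) \<le> e^2" if "e > 0" for e :: real
  proof -
    obtain N where N: "\<forall>m\<ge>N. \<forall>n\<ge>N. dist (X m) (X n) < e"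
      using metric_CauchyD[OF C \<open>e > 0\<close>] by blast
    have "summable (D n) \<and> suminf (D n) \<le> e^2" if "n \<ge> N" for n
    proof -
      have bnd: "(\<Sum>i<K. D n i) \<le> e^2" for K
      proof (rule LIMSEQ_le_const2)
        show "(\<lambda>m. \<Sum>i<K. (l2v (X n) i - l2v (X m) i)^2) \<longlonglongrightarrow> (\<Sum>i<K. D n i)"
          unfolding D_def by (intro tendsto_intros L)
        show "\<exists>M. \<forall>m\<ge>M. (\<Sum>i<K. (l2v (X n) i - l2v (X m) i)^2) \<le> e^2"
        proof (intro exI allI impI)
          fix m assume "m \<ge> N"
          then have d: "norm (X n - X m) < e" using N \<open>n \<ge> N\<close> by (simp add: dist_norm)
          have "(\<Sum>i<K. (l2v (X n) i - l2v (X m) i)^2) \<le> (norm (X n - X m))^2"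
            using l2_partial_le[of "X n - X m" K] by simp
          also have "\<dots> \<le> e^2" using d by (intro power_mono) auto
          finally show "(\<Sum>i<K. (l2v (X n) i - l2v (X m) i)^2) \<le> e^2" .
        qed
      qed
      have s: "summable (D n)"
        by (rule summableI_nonneg_bounded[where x="e^2"]) (use bnd in \<open>auto simp: D_def\<close>)
      moreover have "suminf (D n) \<le> e^2"
        by (rule suminf_le_const[OF s bnd])
      ultimately show ?thesis by blast
    qed
    then show ?thesis by blast
  qed
  obtain N1 where N1: "summable (D N1)" using key[of 1] by auto
  have Lsum: "summable (\<lambda>i. (L i)^2)"
  proof -
    have "summable (\<lambda>i. (l2v (X N1) i + (-1) * (l2v (X N1) i - L i))^2)"
      by (rule sq_summable_add[OF l2v_sum sq_summable_scale]) (use N1 in \<open>simp add: D_def\<close>)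
    then show ?thesis by simp
  qed
  have lL: "l2v (mkl2 L) = L" using Lsum by (simp add: mkl2_inverse)
  have "X \<longlonglongrightarrow> mkl2 L"
    unfolding LIMSEQ_iff
  proof (intro allI impI)
    fix r :: real assume "r > 0"
    then obtain N where N: "\<forall>n\<ge>N. summable (D n) \<and> suminf (D n) \<le> (r/2)^2"
      using key[of "r/2"] by auto
    show "\<exists>no. \<forall>n\<ge>no. norm (X n - mkl2 L) < r"
    proof (intro exI allI impI)
      fix n assume "n \<ge> N"
      have "(norm (X n - mkl2 L))^2 = suminf (D n)"
        unfolding l2_norm_sq by (simp add: lL D_def)
      also have "\<dots> \<le> (r/2)^2" using N \<open>n \<ge> N\<close> by blast
      finally have "norm (X n - mkl2 L) \<le> r/2"
        by (rule power2_le_imp_le) (use \<open>r > 0\<close> in simp)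
      then show "norm (X n - mkl2 L) < r" using \<open>r > 0\<close> by simp
    qed
  qed
  then show "convergent X" unfolding convergent_def by blast
qed


lemma Ma_iff: "x \<in> Ma a \<longleftrightarrow> summable (\<lambda>i. (a i * x i)^2)"
  by (simp add: Ma_def power_mult_distrib)

lemma Ma_diff: assumes "x \<in> Ma a" "y \<in> Ma a" shows "(\<lambda>j. x j - y j) \<in> Ma a"
proof -
  have "summable (\<lambda>i. (a i * x i + (-1) * (a i * y i))^2)"
    by (rule sq_summable_add) (use assms in \<open>auto simp: Ma_iff intro: sq_summable_scale\<close>)
  then show ?thesis by (simp add: Ma_iff algebra_simps)
qed

lemma Ma_add: assumes "x \<in> Ma a" "y \<in> Ma a" shows "(\<lambda>j. x j + y j) \<in> Ma a"
proof -
  have "summable (\<lambda>i. (a i * x i + a i * y i)^2)"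
    by (rule sq_summable_add) (use assms in \<open>auto simp: Ma_iff\<close>)
  then show ?thesis by (simp add: Ma_iff algebra_simps)
qed

lemma Ma_scale: assumes "x \<in> Ma a" shows "(\<lambda>j. c * x j) \<in> Ma a"
proof -
  have "summable (\<lambda>i. (c * (a i * x i))^2)"
    by (rule sq_summable_scale) (use assms in \<open>auto simp: Ma_iff\<close>)
  then show ?thesis by (simp add: Ma_iff algebra_simps)
qed

lemma Ma_zero: "(\<lambda>j. 0) \<in> Ma a" by (simp add: Ma_def)

lemma Ma_sum: fixes u :: "nat \<Rightarrow> nat \<Rightarrow> real" and n :: nat assumes "\<And>i. u i \<in> Ma a" shows "(\<lambda>j. \<Sum>i<n. u i j) \<in> Ma a"
proof (induction n)
  case 0 then show ?case by (simp add: Ma_zero)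
next
  case (Suc n)
  then show ?case using Ma_add[OF Suc assms[of n]] by simp
qed

definition Jm :: "(nat \<Rightarrow> real) \<Rightarrow> (nat \<Rightarrow> real) \<Rightarrow> l2" where
  "Jm a x = mkl2 (\<lambda>i. a i * x i)"

lemma Jm_l2v: "x \<in> Ma a \<Longrightarrow> l2v (Jm a x) = (\<lambda>i. a i * x i)"
  by (simp add: Jm_def mkl2_inverse Ma_iff)

lemma Jm_diff: "x \<in> Ma a \<Longrightarrow> y \<in> Ma a \<Longrightarrow> Jm a (\<lambda>j. x j - y j) = Jm a x - Jm a y"
  by (rule l2v_inj) (simp add: Jm_l2v Ma_diff algebra_simps)

lemma Jm_add: "x \<in> Ma a \<Longrightarrow> y \<in> Ma a \<Longrightarrow> Jm a (\<lambda>j. x j + y j) = Jm a x + Jm a y"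
  by (rule l2v_inj) (simp add: Jm_l2v Ma_add algebra_simps)

lemma Jm_scale: "x \<in> Ma a \<Longrightarrow> Jm a (\<lambda>j. c * x j) = c *\<^sub>R Jm a x"
  by (rule l2v_inj) (simp add: Jm_l2v Ma_scale algebra_simps)

lemma Jm_zero: "Jm a (\<lambda>j. 0) = 0"
  by (rule l2v_inj) (simp add: Jm_l2v Ma_zero)

lemma Jm_sum: fixes u :: "nat \<Rightarrow> nat \<Rightarrow> real" and n :: nat assumes "\<And>i. u i \<in> Ma a"
  shows "Jm a (\<lambda>j. \<Sum>i<n. u i j) = (\<Sum>i<n. Jm a (u i))"
proof (induction n)
  case 0 then show ?case by (simp add: Jm_zero)
next
  case (Suc n)
  have "Jm a (\<lambda>j. \<Sum>i<Suc n. u i j) = Jm a (\<lambda>j. (\<Sum>i<n. u i j) + u n j)" by simp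
  also have "\<dots> = Jm a (\<lambda>j. \<Sum>i<n. u i j) + Jm a (u n)"
    by (rule Jm_add[OF Ma_sum[OF assms] assms])
  finally show ?case using Suc by simp
qed

lemma norm_a_Jm: "x \<in> Ma a \<Longrightarrow> norm_a a x = norm (Jm a x)"
proof -
  assume x: "x \<in> Ma a"
  have "(\<lambda>i. a i * x i * (a i * x i)) = (\<lambda>i. (a i)^2 * (x i)^2)"
    by (simp add: fun_eq_iff power2_eq_square algebra_simps)
  then show ?thesis
    by (simp add: norm_a_def norm_eq_sqrt_inner inner_l2_def Jm_l2v[OF x])
qed

lemma Jm_inj: assumes "\<And>i. a i > 0" "x \<in> Ma a" "y \<in> Ma a" "Jm a x = Jm a y" shows "x = y"
proof
  fix i
  have "a i * x i = a i * y i" using assms(4) Jm_l2v[OF assms(2)] Jm_l2v[OF assms(3)]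
    by (metis)
  then show "x i = y i" using assms(1)[of i] by simp
qed

lemma Jm_surj: assumes "\<And>i. a i > 0" shows "\<exists>x\<in>Ma a. Jm a x = v"
proof -
  define x where "x i = l2v v i / a i" for i
  have ax: "(\<lambda>i. a i * x i) = l2v v" using assms by (simp add: x_def fun_eq_iff less_imp_neq[symmetric])
  have ax': "a i * x i = l2v v i" for i using ax by (simp add: fun_eq_iff)
  have xM: "x \<in> Ma a" unfolding Ma_iff ax' by simp
  moreover have "Jm a x = v" unfolding Jm_def ax by (simp add: l2v_inverse)
  ultimately show ?thesis by blast
qed

lemma ga_sums_iff: assumes "\<And>i. u i \<in> Ma a"
  shows "ga_sums a u s \<longleftrightarrow> s \<in> Ma a \<and> (\<lambda>n. \<Sum>i<n. Jm a (u i)) \<longlonglongrightarrow> Jm a s"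
proof (cases "s \<in> Ma a")
  case True
  have "norm_a a (\<lambda>j. (\<Sum>i<n. u i j) - s j) = norm ((\<Sum>i<n. Jm a (u i)) - Jm a s)" for n
    by (simp add: norm_a_Jm Ma_diff Ma_sum assms True Jm_diff Jm_sum)
  then show ?thesis using True
    by (simp add: ga_sums_def tendsto_norm_zero_iff LIM_zero_iff)
qed (simp add: ga_sums_def)


lemma inner_comb:
  fixes P Q :: "'a \<Rightarrow> 'b::real_inner"
  assumes "\<And>z z'. z \<in> E \<Longrightarrow> z' \<in> E \<Longrightarrow> inner (Q z) (Q z') = inner (P z) (P z')"
    "\<And>i. x i \<in> E" "\<And>k. y k \<in> E"
  shows "inner (\<Sum>i\<in>A. c i *\<^sub>R Q (x i)) (\<Sum>k\<in>B. d k *\<^sub>R Q (y k))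
       = inner (\<Sum>i\<in>A. c i *\<^sub>R P (x i)) (\<Sum>k\<in>B. d k *\<^sub>R P (y k))"
  by (simp add: inner_sum_left inner_sum_right assms)

lemma norm_comb:
  fixes P Q :: "'a \<Rightarrow> 'b::real_inner"
  assumes "\<And>z z'. z \<in> E \<Longrightarrow> z' \<in> E \<Longrightarrow> inner (Q z) (Q z') = inner (P z) (P z')"
    "\<And>i. x i \<in> E" "\<And>k. y k \<in> E"
  shows "norm ((\<Sum>i\<in>A. c i *\<^sub>R Q (x i)) - (\<Sum>k\<in>B. d k *\<^sub>R Q (y k)))
       = norm ((\<Sum>i\<in>A. c i *\<^sub>R P (x i)) - (\<Sum>k\<in>B. d k *\<^sub>R P (y k)))"
  unfolding norm_eq_sqrt_inner
  by (simp add: inner_diff_left inner_diff_right inner_sum_left inner_sum_right assms)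

lemma polar_eq:
  fixes u v u' v' :: "'b::real_inner"
  assumes "norm u = norm u'" "norm v = norm v'" "norm (u - v) = norm (u' - v')"
  shows "inner u v = inner u' v'"
proof -
  have e: "(norm (x - y))^2 = (norm x)^2 + (norm y)^2 - 2 * inner x y" for x y :: 'b
    by (simp add: power2_norm_eq_inner inner_diff_left inner_diff_right inner_commute)
  from e[of u v] e[of u' v'] assms show ?thesis by simp
qed

theorem lemma3p8:
  fixes a :: "nat \<Rightarrow> real" and E1 E2 :: "(nat \<Rightarrow> real) set"
    and f :: "(nat \<Rightarrow> real) \<Rightarrow> (nat \<Rightarrow> real)" and p :: "nat \<Rightarrow> real"
  assumes a_pos: "\<And>i. a i > 0"
    and a_sq: "summable (\<lambda>i. (a i)^2)"
    and E1: "E1 \<noteq> {}" "E1 \<subseteq> Ma a" "bounded_a a E1"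
    and E2: "E2 \<noteq> {}" "E2 \<subseteq> Ma a" "bounded_a a E2"
    and onto: "f ` E1 = E2"
    and iso: "\<And>x y. x \<in> E1 \<Longrightarrow> y \<in> E1 \<Longrightarrow> dist_a a (f x) (f y) = dist_a a x y"
    and p: "p \<in> E1"
  shows
    "(\<forall>x \<alpha>. (\<forall>i. x i \<in> E1) \<and> ga_summable a (\<lambda>i j. \<alpha> i * (x i j - p j)) \<longrightarrow>
         ga_summable a (\<lambda>i j. \<alpha> i * (f (x i) j - f p j)))
   \<and> (\<forall>x \<alpha> y \<beta> s t u. (\<forall>i. x i \<in> E1) \<and> (\<forall>i. y i \<in> E1) \<and>
         ga_sums a (\<lambda>i j. \<alpha> i * (x i j - p j)) s \<and>
         ga_sums a (\<lambda>i j. \<beta> i * (y i j - p j)) s \<and>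
         ga_sums a (\<lambda>i j. \<alpha> i * (f (x i) j - f p j)) t \<and>
         ga_sums a (\<lambda>i j. \<beta> i * (f (y i) j - f p j)) u \<longrightarrow> t = u)
   \<and> (\<exists>F. (\<forall>z\<in>GS a E1 p. F z \<in> Ma a) \<and>
         (\<forall>x \<alpha> s. (\<forall>i. x i \<in> E1) \<and> ga_sums a (\<lambda>i j. \<alpha> i * (x i j - p j)) s \<longrightarrow>
            ga_sums a (\<lambda>i j. \<alpha> i * (f (x i) j - f p j)) (\<lambda>j. F (\<lambda>k. p k + s k) j - f p j)))"
proof -
  have Ma1: "z \<in> Ma a" if "z \<in> E1" for z using E1 that by auto
  have Ma2: "f z \<in> Ma a" if "z \<in> E1" for z using E2 onto that by auto
  define P where "P z = Jm a (\<lambda>j. z j - p j)" for z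
  define Q where "Q z = Jm a (\<lambda>j. f z j - f p j)" for z
  have P_eq: "P z = Jm a z - Jm a p" if "z \<in> E1" for z
    unfolding P_def by (rule Jm_diff[OF Ma1[OF that] Ma1[OF p]])
  have Q_eq: "Q z = Jm a (f z) - Jm a (f p)" if "z \<in> E1" for z
    unfolding Q_def by (rule Jm_diff[OF Ma2[OF that] Ma2[OF p]])
  have nP: "norm (P z - P z') = dist_a a z z'" if "z \<in> E1" "z' \<in> E1" for z z'
    using that by (simp add: P_eq dist_a_def norm_a_Jm Ma_diff Ma1 Jm_diff)
  have nQ: "norm (Q z - Q z') = dist_a a (f z) (f z')" if "z \<in> E1" "z' \<in> E1" for z z'
    using that by (simp add: Q_eq dist_a_def norm_a_Jm Ma_diff Ma2 Jm_diff)
  have P0: "P p = 0" by (simp add: P_eq p)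
  have Q0: "Q p = 0" by (simp add: Q_eq p)
  have ip: "inner (Q z) (Q z') = inner (P z) (P z')" if "z \<in> E1" "z' \<in> E1" for z z'
  proof (rule polar_eq)
    show "norm (Q z) = norm (P z)" using nQ[OF that(1) p] nP[OF that(1) p] iso[OF that(1) p]
      by (simp add: P0 Q0)
    show "norm (Q z') = norm (P z')" using nQ[OF that(2) p] nP[OF that(2) p] iso[OF that(2) p]
      by (simp add: P0 Q0)
    show "norm (Q z - Q z') = norm (P z - P z')" using nQ[OF that] nP[OF that] iso[OF that]
      by simp
  qed
  have sumP: "ga_sums a (\<lambda>i j. \<alpha> i * (x i j - p j)) s \<longleftrightarrow>
      s \<in> Ma a \<and> (\<lambda>n. \<Sum>i<n. \<alpha> i *\<^sub>R P (x i)) \<longlonglongrightarrow> Jm a s"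
    if "\<forall>i. x i \<in> E1" for x \<alpha> s
  proof -
    have M: "(\<lambda>j. \<alpha> i * (x i j - p j)) \<in> Ma a" for i
      using that by (intro Ma_scale Ma_diff Ma1 p) auto
    have J: "Jm a (\<lambda>j. \<alpha> i * (x i j - p j)) = \<alpha> i *\<^sub>R P (x i)" for i
      unfolding P_def using that by (intro Jm_scale Ma_diff Ma1 p) auto
    show ?thesis by (subst ga_sums_iff[OF M]) (simp add: J)
  qed
  have sumQ: "ga_sums a (\<lambda>i j. \<alpha> i * (f (x i) j - f p j)) s \<longleftrightarrow>
      s \<in> Ma a \<and> (\<lambda>n. \<Sum>i<n. \<alpha> i *\<^sub>R Q (x i)) \<longlonglongrightarrow> Jm a s"
    if "\<forall>i. x i \<in> E1" for x \<alpha> s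
  proof -
    have M: "(\<lambda>j. \<alpha> i * (f (x i) j - f p j)) \<in> Ma a" for i
      using that by (intro Ma_scale Ma_diff Ma2 p) auto
    have J: "Jm a (\<lambda>j. \<alpha> i * (f (x i) j - f p j)) = \<alpha> i *\<^sub>R Q (x i)" for i
      unfolding Q_def using that by (intro Jm_scale Ma_diff Ma2 p) auto
    show ?thesis by (subst ga_sums_iff[OF M]) (simp add: J)
  qed
  have partA: "\<exists>t. ga_sums a (\<lambda>i j. \<alpha> i * (f (x i) j - f p j)) t"
    if x: "\<forall>i. x i \<in> E1" and s: "ga_sums a (\<lambda>i j. \<alpha> i * (x i j - p j)) s" for x \<alpha> s
  proof -
    have "(\<lambda>n. \<Sum>i<n. \<alpha> i *\<^sub>R P (x i)) \<longlonglongrightarrow> Jm a s" using s sumP[OF x] by blast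
    then have CS: "Cauchy (\<lambda>n. \<Sum>i<n. \<alpha> i *\<^sub>R P (x i))" by (rule LIMSEQ_imp_Cauchy)
    have "Cauchy (\<lambda>n. \<Sum>i<n. \<alpha> i *\<^sub>R Q (x i))"
    proof (rule metric_CauchyI)
      fix e :: real assume "e > 0"
      then obtain M where M: "\<forall>m\<ge>M. \<forall>n\<ge>M.
          dist (\<Sum>i<m. \<alpha> i *\<^sub>R P (x i)) (\<Sum>i<n. \<alpha> i *\<^sub>R P (x i)) < e"
        using metric_CauchyD[OF CS] by blast
      show "\<exists>M. \<forall>m\<ge>M. \<forall>n\<ge>M. dist (\<Sum>i<m. \<alpha> i *\<^sub>R Q (x i)) (\<Sum>i<n. \<alpha> i *\<^sub>R Q (x i)) < e"
      proof (intro exI allI impI)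
        fix m n assume "m \<ge> M" "n \<ge> M"
        then have "dist (\<Sum>i<m. \<alpha> i *\<^sub>R P (x i)) (\<Sum>i<n. \<alpha> i *\<^sub>R P (x i)) < e"
          using M by blast
        moreover have "norm ((\<Sum>i<m. \<alpha> i *\<^sub>R Q (x i)) - (\<Sum>i<n. \<alpha> i *\<^sub>R Q (x i)))
            = norm ((\<Sum>i<m. \<alpha> i *\<^sub>R P (x i)) - (\<Sum>i<n. \<alpha> i *\<^sub>R P (x i)))"
          by (rule norm_comb[where E=E1]) (use ip x in auto)
        ultimately show "dist (\<Sum>i<m. \<alpha> i *\<^sub>R Q (x i)) (\<Sum>i<n. \<alpha> i *\<^sub>R Q (x i)) < e"
          by (simp add: dist_norm)
      qed
    qed
    then obtain t' where "(\<lambda>n. \<Sum>i<n. \<alpha> i *\<^sub>R Q (x i)) \<longlonglongrightarrow> t'"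
      unfolding Cauchy_convergent_iff convergent_def by blast
    moreover obtain t where "t \<in> Ma a" "Jm a t = t'" using Jm_surj[where a=a and v=t'] a_pos by blast
    ultimately show ?thesis using sumQ[OF x] by blast
  qed
  have partB: "t = u"
    if x: "\<forall>i. x i \<in> E1" and y: "\<forall>i. y i \<in> E1"
      and s1: "ga_sums a (\<lambda>i j. \<alpha> i * (x i j - p j)) s"
      and s2: "ga_sums a (\<lambda>i j. \<beta> i * (y i j - p j)) s"
      and t: "ga_sums a (\<lambda>i j. \<alpha> i * (f (x i) j - f p j)) t"
      and u: "ga_sums a (\<lambda>i j. \<beta> i * (f (y i) j - f p j)) u"
    for x \<alpha> y \<beta> s t u
  proof -
    have S: "(\<lambda>n. \<Sum>i<n. \<alpha> i *\<^sub>R P (x i)) \<longlonglongrightarrow> Jm a s" using s1 sumP[OF x] by blast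
    have R: "(\<lambda>n. \<Sum>i<n. \<beta> i *\<^sub>R P (y i)) \<longlonglongrightarrow> Jm a s" using s2 sumP[OF y] by blast
    have T: "(\<lambda>n. \<Sum>i<n. \<alpha> i *\<^sub>R Q (x i)) \<longlonglongrightarrow> Jm a t" and tM: "t \<in> Ma a"
      using t sumQ[OF x] by blast+
    have U: "(\<lambda>n. \<Sum>i<n. \<beta> i *\<^sub>R Q (y i)) \<longlonglongrightarrow> Jm a u" and uM: "u \<in> Ma a"
      using u sumQ[OF y] by blast+
    have "(\<lambda>n. norm ((\<Sum>i<n. \<alpha> i *\<^sub>R P (x i)) - (\<Sum>i<n. \<beta> i *\<^sub>R P (y i)))) \<longlonglongrightarrow> norm (Jm a s - Jm a s)"
      by (intro tendsto_intros S R)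
    moreover have "norm ((\<Sum>i<n. \<alpha> i *\<^sub>R Q (x i)) - (\<Sum>i<n. \<beta> i *\<^sub>R Q (y i)))
            = norm ((\<Sum>i<n. \<alpha> i *\<^sub>R P (x i)) - (\<Sum>i<n. \<beta> i *\<^sub>R P (y i)))" for n
      by (rule norm_comb[where E=E1]) (use ip x y in auto)
    ultimately have "(\<lambda>n. norm ((\<Sum>i<n. \<alpha> i *\<^sub>R Q (x i)) - (\<Sum>i<n. \<beta> i *\<^sub>R Q (y i)))) \<longlonglongrightarrow> 0"
      by simp
    then have "(\<lambda>n. (\<Sum>i<n. \<alpha> i *\<^sub>R Q (x i)) - (\<Sum>i<n. \<beta> i *\<^sub>R Q (y i))) \<longlonglongrightarrow> 0"
      by (simp add: tendsto_norm_zero_iff)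
    moreover have "(\<lambda>n. (\<Sum>i<n. \<alpha> i *\<^sub>R Q (x i)) - (\<Sum>i<n. \<beta> i *\<^sub>R Q (y i))) \<longlonglongrightarrow> Jm a t - Jm a u"
      by (intro tendsto_intros T U)
    ultimately have "Jm a t - Jm a u = 0" by (rule LIMSEQ_unique[rotated])
    then show "t = u" using Jm_inj[OF a_pos tM uM] by simp
  qed
  define F where "F z = (\<lambda>j. f p j + (SOME t. \<exists>x \<alpha>. (\<forall>i. x i \<in> E1) \<and>
      ga_sums a (\<lambda>i j. \<alpha> i * (x i j - p j)) (\<lambda>k. z k - p k) \<and>
      ga_sums a (\<lambda>i j. \<alpha> i * (f (x i) j - f p j)) t) j)" for z
  have Fprop: "ga_sums a (\<lambda>i j. \<alpha> i * (f (x i) j - f p j)) (\<lambda>j. F (\<lambda>k. p k + s k) j - f p j)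
      \<and> (\<lambda>j. F (\<lambda>k. p k + s k) j - f p j) \<in> Ma a"
    if x: "\<forall>i. x i \<in> E1" and s: "ga_sums a (\<lambda>i j. \<alpha> i * (x i j - p j)) s" for x \<alpha> s
  proof -
    obtain t where t: "ga_sums a (\<lambda>i j. \<alpha> i * (f (x i) j - f p j)) t" using partA[OF x s] by blast
    let ?Pr = "\<lambda>t. \<exists>x \<alpha>. (\<forall>i. x i \<in> E1) \<and>
      ga_sums a (\<lambda>i j. \<alpha> i * (x i j - p j)) s \<and>
      ga_sums a (\<lambda>i j. \<alpha> i * (f (x i) j - f p j)) t"
    have "?Pr t" using x s t by blast
    then have "?Pr (SOME t. ?Pr t)" by (rule someI[of ?Pr])
    then obtain x' \<alpha>' where x': "\<forall>i. x' i \<in> E1" and s': "ga_sums a (\<lambda>i j. \<alpha>' i * (x' i j - p j)) s"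
      and t': "ga_sums a (\<lambda>i j. \<alpha>' i * (f (x' i) j - f p j)) (SOME t. ?Pr t)" by blast
    have eq: "t = (SOME t. ?Pr t)" by (rule partB[OF x x' s s' t t'])
    have "(\<lambda>j. F (\<lambda>k. p k + s k) j - f p j) = (SOME t. ?Pr t)"
      by (simp add: F_def)
    then show ?thesis using t eq by (simp add: ga_sums_def)
  qed
  show ?thesis
  proof (intro conjI allI impI)
    fix x \<alpha> assume "(\<forall>i. x i \<in> E1) \<and> ga_summable a (\<lambda>i j. \<alpha> i * (x i j - p j))"
    then show "ga_summable a (\<lambda>i j. \<alpha> i * (f (x i) j - f p j))"
      using partA unfolding ga_summable_def by blast
  next
    fix x \<alpha> y \<beta> s t u
    assume "(\<forall>i. x i \<in> E1) \<and> (\<forall>i. y i \<in> E1) \<and>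
         ga_sums a (\<lambda>i j. \<alpha> i * (x i j - p j)) s \<and>
         ga_sums a (\<lambda>i j. \<beta> i * (y i j - p j)) s \<and>
         ga_sums a (\<lambda>i j. \<alpha> i * (f (x i) j - f p j)) t \<and>
         ga_sums a (\<lambda>i j. \<beta> i * (f (y i) j - f p j)) u"
    then show "t = u" using partB by blast
  next
    show "\<exists>F. (\<forall>z\<in>GS a E1 p. F z \<in> Ma a) \<and>
         (\<forall>x \<alpha> s. (\<forall>i. x i \<in> E1) \<and> ga_sums a (\<lambda>i j. \<alpha> i * (x i j - p j)) s \<longrightarrow>
            ga_sums a (\<lambda>i j. \<alpha> i * (f (x i) j - f p j)) (\<lambda>j. F (\<lambda>k. p k + s k) j - f p j))"
    proof (intro exI[of _ F] conjI ballI allI impI)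
      fix z assume "z \<in> GS a E1 p"
      then obtain x \<alpha> s where x: "\<forall>i. x i \<in> E1" and s: "ga_sums a (\<lambda>i j. \<alpha> i * (x i j - p j)) s"
        and z: "z = (\<lambda>j. p j + s j)" unfolding GS_def by blast
      have "(\<lambda>j. F z j - f p j) \<in> Ma a" using Fprop[OF x s] z by simp
      then have "(\<lambda>j. f p j + (F z j - f p j)) \<in> Ma a" by (rule Ma_add[OF Ma2[OF p]])
      then show "F z \<in> Ma a" by simp
    next
      fix x \<alpha> s assume "(\<forall>i. x i \<in> E1) \<and> ga_sums a (\<lambda>i j. \<alpha> i * (x i j - p j)) s"
      then show "ga_sums a (\<lambda>i j. \<alpha> i * (f (x i) j - f p j)) (\<lambda>j. F (\<lambda>k. p k + s k) j - f p j)"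
        using Fprop by blast
    qed
  qed
qed

end
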